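(* Let $\mathbf K$ be a commutative field and $p\in\mathbb N$. For $A\in\mathbf K^{\mathcal M_p}$ let $L_A\in\mathbf K^{\mathcal M_{p\times p}}$ be the lower triangular element of Toeplitz type defined, for $l\in\mathbb N$ and $0\le u,w<p^l$ (identified with words of length $l$), by $L_A[u,w]=A[u-w]$ if $u\ge w$ and $L_A[u,w]=0$ if $u<w$, where $u-w$ is read as a word of length $l$. Then $$\dim\big(\overline{A}^{rec}\big)\le\dim\big(\overline{L_A}^{rec}\big)\le 2\dim\big(\overline{A}^{rec}\big),$$ and $A\mapsto L_A$ induces an isomorphism of vector spaces between $\mathrm{Rec}_p(\mathbf K)$ and $\mathcal T_{p-rec}(\mathbf K)$, the space of lower triangular elements of Toeplitz type in $\mathrm{Rec}_{p\times p}(\mathbf K)$.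
   Context: For $p,q,l\in\mathbb N$, $\mathcal M_{p\times q}^l$ is the set of pairs $(U,W)$ of words of common length $l$ with $U\in\{0,\dots,p-1\}^l$, $W\in\{0,\dots,q-1\}^l$, $\mathcal M_{p\times q}=\bigcup_l\mathcal M_{p\times q}^l$, and $\mathcal M_p=\mathcal M_{p\times1}$ is identified with the free monoid of words over $\{0,\dots,p-1\}$. Words of length $l$ over $\{0,\dots,p-1\}$ are identified with $\{0,\dots,p^l-1\}$ via $u_1\dots u_l\mapsto\sum_{j=1}^lu_jp^{j-1}$, so that for $A\in\mathbf K^{\mathcal M_{p\times p}}$ the restriction $A[\mathcal M_{p\times p}^l]$ is a $p^l\times p^l$ matrix. $A$ is of Toeplitz type if every $A[\mathcal M_{p\times p}^l]$ is a Toeplitz matrix (entries depend only on $u-w$), and lower triangular if $A[u,w]=0$ whenever $u<w$. Shift maps: $(\rho(S,T)A)[U,W]=A[US,WT]$; the recursive closure $\overline{A}^{rec}$ is the span of all $\rho(S,T)A$; $\mathrm{Rec}_{p\times q}(\mathbf K)$ is the set of $A$ with $\dim\overline{A}^{rec}<\infty$, and $\mathrm{Rec}_p(\mathbf K)=\mathrm{Rec}_{p\times1}(\mathbf K)$. *)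

theory Defs
  imports Main "HOL-Library.Function_Algebras" "HOL-Library.Extended_Nat"
begin

definition fscale :: "'k::field \<Rightarrow> ('a \<Rightarrow> 'k) \<Rightarrow> ('a \<Rightarrow> 'k)" where
  "fscale c f = (\<lambda>x. c * f x)"

lemma vector_space_fscale: "vector_space (fscale :: 'k::field \<Rightarrow> ('a \<Rightarrow> 'k) \<Rightarrow> _)"
  by unfold_locales (auto simp: fscale_def fun_eq_iff algebra_simps)

abbreviation fspan :: "('a \<Rightarrow> 'k::field) set \<Rightarrow> ('a \<Rightarrow> 'k) set" where
  "fspan \<equiv> module.span fscale"

abbreviation fdim :: "('a \<Rightarrow> 'k::field) set \<Rightarrow> nat" where
  "fdim \<equiv> vector_space.dim fscale"

definition fin_dim :: "('a \<Rightarrow> 'k::field) set \<Rightarrow> bool" where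
  "fin_dim V \<longleftrightarrow> (\<exists>B. finite B \<and> V \<subseteq> fspan B)"

definition edim :: "('a \<Rightarrow> 'k::field) set \<Rightarrow> enat" where
  "edim V = (if fin_dim V then enat (fdim V) else \<infinity>)"

definition words :: "nat \<Rightarrow> nat list set" where
  "words p = {w. set w \<subseteq> {..<p}}"

definition words_len :: "nat \<Rightarrow> nat \<Rightarrow> nat list set" where
  "words_len p l = {w. length w = l \<and> set w \<subseteq> {..<p}}"

definition num :: "nat \<Rightarrow> nat list \<Rightarrow> nat" where
  "num p w = (\<Sum>j<length w. w ! j * p ^ j)"

definition word_of :: "nat \<Rightarrow> nat \<Rightarrow> nat \<Rightarrow> nat list" where
  "word_of p l n = map (\<lambda>j. (n div p ^ j) mod p) [0..<l]"

definition Mpq :: "nat \<Rightarrow> nat \<Rightarrow> (nat list \<times> nat list) set" where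
  "Mpq p q = {(U, W). length U = length W \<and> set U \<subseteq> {..<p} \<and> set W \<subseteq> {..<q}}"

text \<open>Elements of K^{M_p} are represented as functions on nat lists vanishing off the words.\<close>
definition Fun1 :: "nat \<Rightarrow> (nat list \<Rightarrow> 'k::zero) set" where
  "Fun1 p = {A. \<forall>w. w \<notin> words p \<longrightarrow> A w = 0}"

definition Fun2 :: "nat \<Rightarrow> nat \<Rightarrow> (nat list \<times> nat list \<Rightarrow> 'k::zero) set" where
  "Fun2 p q = {A. \<forall>x. x \<notin> Mpq p q \<longrightarrow> A x = 0}"

definition rho1 :: "nat \<Rightarrow> nat list \<Rightarrow> (nat list \<Rightarrow> 'k::zero) \<Rightarrow> (nat list \<Rightarrow> 'k)" where
  "rho1 p S A = (\<lambda>U. if U \<in> words p then A (U @ S) else 0)"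

definition rho2 :: "nat \<Rightarrow> nat \<Rightarrow> nat list \<times> nat list \<Rightarrow> (nat list \<times> nat list \<Rightarrow> 'k::zero)
    \<Rightarrow> (nat list \<times> nat list \<Rightarrow> 'k)" where
  "rho2 p q ST A = (\<lambda>(U, W). if (U, W) \<in> Mpq p q then A (U @ fst ST, W @ snd ST) else 0)"

definition rec_closure1 :: "nat \<Rightarrow> (nat list \<Rightarrow> 'k::field) \<Rightarrow> (nat list \<Rightarrow> 'k) set" where
  "rec_closure1 p A = fspan {rho1 p S A | S. S \<in> words p}"

definition rec_closure2 :: "nat \<Rightarrow> nat \<Rightarrow> (nat list \<times> nat list \<Rightarrow> 'k::field)
    \<Rightarrow> (nat list \<times> nat list \<Rightarrow> 'k) set" where
  "rec_closure2 p q A = fspan {rho2 p q ST A | ST. ST \<in> Mpq p q}"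

definition Rec1 :: "nat \<Rightarrow> (nat list \<Rightarrow> 'k::field) set" where
  "Rec1 p = {A \<in> Fun1 p. fin_dim (rec_closure1 p A)}"

definition Rec2 :: "nat \<Rightarrow> nat \<Rightarrow> (nat list \<times> nat list \<Rightarrow> 'k::field) set" where
  "Rec2 p q = {A \<in> Fun2 p q. fin_dim (rec_closure2 p q A)}"

definition toeplitz_type :: "nat \<Rightarrow> (nat list \<times> nat list \<Rightarrow> 'k) \<Rightarrow> bool" where
  "toeplitz_type p B \<longleftrightarrow> (\<forall>l U W U' W'. U \<in> words_len p l \<and> W \<in> words_len p l \<and>
      U' \<in> words_len p l \<and> W' \<in> words_len p l \<and>
      int (num p U) - int (num p W) = int (num p U') - int (num p W') \<longrightarrow>
      B (U, W) = B (U', W'))"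

definition lower_triangular :: "nat \<Rightarrow> (nat list \<times> nat list \<Rightarrow> 'k::zero) \<Rightarrow> bool" where
  "lower_triangular p B \<longleftrightarrow> (\<forall>l U W. U \<in> words_len p l \<and> W \<in> words_len p l \<and>
      num p U < num p W \<longrightarrow> B (U, W) = 0)"

definition LA :: "nat \<Rightarrow> (nat list \<Rightarrow> 'k::zero) \<Rightarrow> (nat list \<times> nat list \<Rightarrow> 'k)" where
  "LA p A = (\<lambda>(U, W). if (U, W) \<in> Mpq p p \<and> num p W \<le> num p U
      then A (word_of p (length U) (num p U - num p W)) else 0)"

definition Trec :: "nat \<Rightarrow> (nat list \<times> nat list \<Rightarrow> 'k::field) set" where
  "Trec p = {B \<in> Rec2 p p. toeplitz_type p B \<and> lower_triangular p B}"

end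

theory Submission
  imports Defs
begin


lemma num_Nil[simp]: "num p [] = 0" by (simp add: num_def)
lemma num_Cons[simp]: "num p (x # w) = x + p * num p w"
  by (simp add: num_def sum.lessThan_Suc_shift sum_distrib_left algebra_simps del: sum.lessThan_Suc)

lemma word_of_0[simp]: "word_of p 0 n = []" by (simp add: word_of_def)
lemma word_of_Suc: "word_of p (Suc l) n = n mod p # word_of p l (n div p)"
  unfolding word_of_def by (simp add: map_upt_Suc div_mult2_eq del: upt_Suc)

lemma num_append: "num p (U @ S) = num p U + p ^ length U * num p S"
  by (induction U) (auto simp: algebra_simps)

lemma num_less: "set w \<subseteq> {..<p} \<Longrightarrow> num p w < p ^ length w"
proof (induction w)
  case Nil then show ?case by simp
next
  case (Cons x w)
  then have "x < p" "num p w + 1 \<le> p ^ length w" by auto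
  then have "x + p * num p w < p + p * num p w" by simp
  also have "\<dots> = p * (num p w + 1)" by (simp add: algebra_simps)
  also have "\<dots> \<le> p * p ^ length w" using \<open>num p w + 1 \<le> p ^ length w\<close> by (rule mult_le_mono2)
  finally show ?case by simp
qed

lemma word_of_num: "set w \<subseteq> {..<p} \<Longrightarrow> word_of p (length w) (num p w) = w"
  by (induction w) (auto simp: word_of_Suc)

lemma num_word_of: "n < p ^ l \<Longrightarrow> num p (word_of p l n) = n"
proof (induction l arbitrary: n)
  case 0 then show ?case by simp
next
  case (Suc l)
  have "p > 0" using Suc.prems by (cases "p = 0") auto
  have "n div p < p ^ l" using Suc.prems \<open>p > 0\<close>
    by (simp add: div_less_iff_less_mult mult.commute)
  then show ?case using Suc.IH by (simp add: word_of_Suc)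
qed

lemma length_word_of[simp]: "length (word_of p l n) = l" by (simp add: word_of_def)

lemma set_word_of: "n < p ^ l \<Longrightarrow> set (word_of p l n) \<subseteq> {..<p}"
proof (induction l arbitrary: n)
  case 0 then show ?case by simp
next
  case (Suc l)
  have "p > 0" using Suc.prems by (cases "p = 0") auto
  have "n div p < p ^ l" using Suc.prems \<open>p > 0\<close>
    by (simp add: div_less_iff_less_mult mult.commute)
  then show ?case using Suc.IH \<open>p > 0\<close> by (simp add: word_of_Suc)
qed

lemma word_of_split:
  assumes "a < p ^ l" "b < p ^ k"
  shows "word_of p (l + k) (a + p ^ l * b) = word_of p l a @ word_of p k b"
proof -
  let ?w = "word_of p l a @ word_of p k b"
  have s: "set ?w \<subseteq> {..<p}" using set_word_of[OF assms(1)] set_word_of[OF assms(2)] by auto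
  have "num p ?w = a + p ^ l * b" using assms by (simp add: num_append num_word_of)
  then show ?thesis using word_of_num[OF s] by simp
qed



interpretation fv: vector_space "fscale :: 'k::field \<Rightarrow> ('a \<Rightarrow> 'k) \<Rightarrow> ('a \<Rightarrow> 'k)"
  by (rule vector_space_fscale)

lemma lin_img:
  fixes f :: "('a \<Rightarrow> 'k::field) \<Rightarrow> ('b \<Rightarrow> 'k)"
  assumes lf: "Vector_Spaces.linear fscale fscale f" and fd: "fin_dim V"
  shows "fin_dim (f ` V) \<and> fdim (f ` V) \<le> fdim V"
proof -
  obtain C where C: "finite C" "V \<subseteq> fspan C" using fd fin_dim_def by blast
  obtain B where B: "B \<subseteq> V" "fv.independent B" "V \<subseteq> fspan B" "card B = fdim V"
    by (rule fv.basis_exists)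
  have fB: "finite B" using fv.independent_span_bound[OF C(1) B(2)] B(1) C(2) by blast
  have si: "fspan (f ` B) = f ` fspan B"
    by (rule module_hom.span_image[OF module_hom_linearI[OF lf]])
  have sp: "f ` V \<subseteq> fspan (f ` B)" using B(3) si by auto
  have "fdim (f ` V) \<le> card (f ` B)" using fv.dim_le_card[OF sp] fB by simp
  also have "\<dots> \<le> card B" using fB card_image_le by blast
  finally show ?thesis using sp fB B(4) unfolding fin_dim_def by auto
qed



definition Qop :: "nat \<Rightarrow> (nat list \<times> nat list \<Rightarrow> 'k::zero) \<Rightarrow> (nat list \<Rightarrow> 'k)" where
  "Qop p B = (\<lambda>U. if U \<in> words p then B (U, replicate (length U) 0) else 0)"

definition Uop :: "nat \<Rightarrow> (nat list \<Rightarrow> 'k::zero) \<Rightarrow> (nat list \<times> nat list \<Rightarrow> 'k)" where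
  "Uop p A = (\<lambda>(U, W). if (U, W) \<in> Mpq p p \<and> num p U < num p W
      then A (word_of p (length U) (num p U + p ^ length U - num p W)) else 0)"

lemma num_replicate0[simp]: "num p (replicate n 0) = 0"
  by (induction n) auto

lemma rho2_LA:
  fixes A :: "nat list \<Rightarrow> 'k::field"
  assumes ST: "(S, T) \<in> Mpq p p"
  shows "rho2 p p (S, T) (LA p A) =
    (if num p T \<le> num p S then LA p (rho1 p (word_of p (length S) (num p S - num p T)) A) else 0)
  + (if num p T < num p S then Uop p (rho1 p (word_of p (length S) (num p S - num p T - 1)) A) else 0)"
proof (rule ext, clarify)
  fix U W
  show "rho2 p p (S, T) (LA p A) (U, W) =
    ((if num p T \<le> num p S then LA p (rho1 p (word_of p (length S) (num p S - num p T)) A) else 0)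
  + (if num p T < num p S then Uop p (rho1 p (word_of p (length S) (num p S - num p T - 1)) A) else 0)) (U, W)"
  proof (cases "(U, W) \<in> Mpq p p")
    case False
    then show ?thesis by (simp add: rho2_def LA_def Uop_def)
  next
    case True
    define l where "l = length U"
    define k where "k = length S"
    define P where "P = p ^ l"
    define u where "u = num p U"
    define w where "w = num p W"
    define s where "s = num p S"
    define t where "t = num p T"
    have lens: "length W = l" "length T = k" using True ST by (auto simp: Mpq_def l_def k_def)
    have sets: "set U \<subseteq> {..<p}" "set W \<subseteq> {..<p}" "set S \<subseteq> {..<p}" "set T \<subseteq> {..<p}"
      using True ST by (auto simp: Mpq_def)
    have bu: "u < P" "w < P" "s < p ^ k" "t < p ^ k"
      using num_less[OF sets(1)] num_less[OF sets(2)] num_less[OF sets(3)] num_less[OF sets(4)] lens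
      by (auto simp: u_def w_def s_def t_def P_def l_def k_def)
    have M2: "(U @ S, W @ T) \<in> Mpq p p" using True ST by (auto simp: Mpq_def)
    have nUS: "num p (U @ S) = u + P * s" and nWT: "num p (W @ T) = w + P * t"
      using lens by (auto simp: num_append u_def s_def w_def t_def P_def l_def)
    have lenUS: "length (U @ S) = l + k" by (simp add: l_def k_def)
    have LHS: "rho2 p p (S, T) (LA p A) (U, W) =
       (if w + P * t \<le> u + P * s then A (word_of p (l + k) (u + P * s - (w + P * t))) else 0)"
      using True M2 by (simp add: rho2_def LA_def nUS nWT l_def k_def)
    have wo: "set (word_of p l n) \<subseteq> {..<p}" if "n < P" for n
      using set_word_of[of n p l] that by (simp add: P_def)
    show ?thesis
    proof (cases "t \<le> s")
      case ts: True
      show ?thesis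
      proof (cases "w \<le> u")
        case wu: True
        have e: "u + P * s - (w + P * t) = (u - w) + P * (s - t)"
          using ts wu by (simp add: diff_mult_distrib2)
        have "u - w < P" using bu by simp
        moreover have "s - t < p ^ k" using bu by simp
        ultimately have spl: "word_of p (l + k) (u + P * s - (w + P * t)) = word_of p l (u - w) @ word_of p k (s - t)"
          using word_of_split[of "u - w" p l "s - t" k] e unfolding P_def by simp
        have le: "w + P * t \<le> u + P * s" using ts wu by (simp add: add_mono)
        have ww: "word_of p l (u - w) \<in> words p" using wo[of "u - w"] bu by (simp add: words_def)
        show ?thesis using LHS le spl True wu ww ts
          by (simp add: LA_def Uop_def rho1_def u_def w_def s_def t_def l_def k_def)
      next
        case wu: False
        show ?thesis
        proof (cases "t < s")
          case tls: True
          have "P * t + P \<le> P * s" using tls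
            by (metis add.commute mult_Suc_right mult_le_mono2 Suc_leI)
          then have e: "u + P * s - (w + P * t) = (u + P - w) + P * (s - t - 1)"
            using wu bu by (simp add: diff_mult_distrib2)
          have le: "w + P * t \<le> u + P * s" using \<open>P * t + P \<le> P * s\<close> bu by linarith
          have "u + P - w < P" using wu bu by linarith
          moreover have "s - t - 1 < p ^ k" using bu by simp
          ultimately have spl: "word_of p (l + k) (u + P * s - (w + P * t)) = word_of p l (u + P - w) @ word_of p k (s - t - 1)"
            using word_of_split[of "u + P - w" p l "s - t - 1" k] e unfolding P_def by simp
          have ww: "word_of p l (u + P - w) \<in> words p" using wo[of "u + P - w"] \<open>u + P - w < P\<close> by (simp add: words_def)
          show ?thesis using LHS le spl True wu ww tls
            by (simp add: LA_def Uop_def rho1_def u_def w_def s_def t_def l_def k_def P_def)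
        next
          case False
          then have "t = s" using ts by simp
          then have "\<not> w + P * t \<le> u + P * s" using wu by simp
          then show ?thesis using LHS True wu \<open>t = s\<close>
            by (simp add: LA_def u_def w_def s_def t_def)
        qed
      qed
    next
      case ts: False
      have "P * s + P \<le> P * t" using ts
        by (metis add.commute mult_Suc_right mult_le_mono2 Suc_leI not_le)
      then have "\<not> w + P * t \<le> u + P * s" using bu by linarith
      then show ?thesis using LHS ts by (simp add: s_def t_def)
    qed
  qed
qed



lemma lin_LA: "Vector_Spaces.linear fscale fscale (LA p :: (nat list \<Rightarrow> 'k::field) \<Rightarrow> _)"
  unfolding Vector_Spaces.linear_iff
  by (auto simp: vector_space_fscale LA_def fscale_def fun_eq_iff split: prod.splits)

lemma lin_Uop: "Vector_Spaces.linear fscale fscale (Uop p :: (nat list \<Rightarrow> 'k::field) \<Rightarrow> _)"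
  unfolding Vector_Spaces.linear_iff
  by (auto simp: vector_space_fscale Uop_def fscale_def fun_eq_iff split: prod.splits)

lemma lin_Qop: "Vector_Spaces.linear fscale fscale (Qop p :: (_ \<Rightarrow> 'k::field) \<Rightarrow> _)"
  unfolding Vector_Spaces.linear_iff
  by (auto simp: vector_space_fscale Qop_def fscale_def fun_eq_iff)

lemma rep_Mpq: "U \<in> words p \<Longrightarrow> (U, replicate (length U) 0) \<in> Mpq p p"
  by (cases U) (auto simp: Mpq_def words_def)

lemma Qop_LA:
  assumes "A \<in> Fun1 p" shows "Qop p (LA p A) = A"
proof
  fix U
  show "Qop p (LA p A) U = A U"
  proof (cases "U \<in> words p")
    case True
    then have "word_of p (length U) (num p U) = U" using word_of_num by (auto simp: words_def)
    then show ?thesis using True rep_Mpq[OF True] by (simp add: Qop_def LA_def)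
  next
    case False then show ?thesis using assms by (simp add: Qop_def Fun1_def)
  qed
qed

lemma Qop_Uop: "Qop p (Uop p Y) = 0"
  by (auto simp: Qop_def Uop_def fun_eq_iff)

lemma rho1_Fun1: "rho1 p X A \<in> Fun1 p"
  by (simp add: rho1_def Fun1_def)

lemma Qop_rho2:
  fixes A :: "nat list \<Rightarrow> 'k::field"
  assumes "(S, T) \<in> Mpq p p"
  shows "Qop p (rho2 p p (S, T) (LA p A)) =
    (if num p T \<le> num p S then rho1 p (word_of p (length S) (num p S - num p T)) A else 0)"
proof -
  have add: "Qop p (x + y) = Qop p x + Qop p y" for x y :: "_ \<Rightarrow> 'k"
    by (auto simp: Qop_def fun_eq_iff)
  have z: "Qop p (0 :: _ \<Rightarrow> 'k) = 0" by (auto simp: Qop_def fun_eq_iff)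
  show ?thesis unfolding rho2_LA[OF assms] add
    by (simp add: z Qop_Uop Qop_LA[OF rho1_Fun1])
qed

lemma Qop_img:
  fixes A :: "nat list \<Rightarrow> 'k::field"
  assumes "A \<in> Fun1 p"
  shows "Qop p ` rec_closure2 p p (LA p A) = rec_closure1 p A"
proof -
  let ?G2 = "{rho2 p p ST (LA p A) | ST. ST \<in> Mpq p p}"
  let ?G1 = "{rho1 p S A | S. S \<in> words p}"
  have si: "fspan (Qop p ` ?G2) = Qop p ` fspan ?G2"
    by (rule module_hom.span_image[OF module_hom_linearI[OF lin_Qop]])
  have "Qop p ` ?G2 \<subseteq> fspan ?G1"
  proof
    fix x assume "x \<in> Qop p ` ?G2"
    then obtain ST where ST0: "ST \<in> Mpq p p" and x0: "x = Qop p (rho2 p p ST (LA p A))"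
      by blast
    obtain S T where STe: "ST = (S, T)" by (cases ST)
    have ST: "(S, T) \<in> Mpq p p" and x: "x = Qop p (rho2 p p (S, T) (LA p A))"
      using ST0 x0 STe by simp_all
    have sS: "set S \<subseteq> {..<p}" using ST by (simp add: Mpq_def)
    have "num p S < p ^ length S" by (rule num_less[OF sS])
    then have "num p S - num p T < p ^ length S" by linarith
    then have "set (word_of p (length S) (num p S - num p T)) \<subseteq> {..<p}" by (rule set_word_of)
    then have "word_of p (length S) (num p S - num p T) \<in> words p" by (simp add: words_def)
    then have inG: "rho1 p (word_of p (length S) (num p S - num p T)) A \<in> ?G1" by blast
    show "x \<in> fspan ?G1"
    proof (cases "num p T \<le> num p S")
      case True
      have "x = rho1 p (word_of p (length S) (num p S - num p T)) A" unfolding x Qop_rho2[OF ST] using True by (rule if_P)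
      then show ?thesis using subsetD[OF fv.span_superset inG] by simp
    next
      case False
      have "x = 0" unfolding x Qop_rho2[OF ST] using False by (rule if_not_P)
      then show ?thesis using fv.span_zero by simp
    qed
  qed
  then have 1: "fspan (Qop p ` ?G2) \<subseteq> fspan ?G1"
    by (rule fv.span_minimal[OF _ fv.subspace_span])
  have "?G1 \<subseteq> Qop p ` ?G2"
  proof
    fix x assume "x \<in> ?G1"
    then obtain S where S: "S \<in> words p" and x: "x = rho1 p S A" by blast
    have M: "(S, replicate (length S) 0) \<in> Mpq p p" by (rule rep_Mpq[OF S])
    have "word_of p (length S) (num p S) = S" using S word_of_num by (auto simp: words_def)
    then have "x = Qop p (rho2 p p (S, replicate (length S) 0) (LA p A))"
      unfolding Qop_rho2[OF M] x by simp
    then show "x \<in> Qop p ` ?G2" using M by blast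
  qed
  then have 2: "fspan ?G1 \<subseteq> fspan (Qop p ` ?G2)" by (rule fv.span_mono)
  have "fspan (Qop p ` ?G2) = fspan ?G1" using 1 2 by (rule subset_antisym)
  then show ?thesis using si unfolding rec_closure1_def rec_closure2_def by simp
qed



lemma upper:
  fixes A :: "nat list \<Rightarrow> 'k::field"
  assumes fd: "fin_dim (rec_closure1 p A)"
  shows "fin_dim (rec_closure2 p p (LA p A)) \<and>
         fdim (rec_closure2 p p (LA p A)) \<le> 2 * fdim (rec_closure1 p A)"
proof -
  let ?V1 = "rec_closure1 p A"
  let ?G2 = "{rho2 p p ST (LA p A) | ST. ST \<in> Mpq p p}"
  obtain C where C: "finite C" "?V1 \<subseteq> fspan C" using fd fin_dim_def by blast
  obtain B where B: "B \<subseteq> ?V1" "fv.independent B" "?V1 \<subseteq> fspan B" "card B = fdim ?V1"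
    by (rule fv.basis_exists)
  have fB: "finite B" using fv.independent_span_bound[OF C(1) B(2)] B(1) C(2) by blast
  define D where "D = LA p ` B \<union> Uop p ` B"
  have fD: "finite D" using fB by (simp add: D_def)
  have siL: "fspan (LA p ` B) = LA p ` fspan B"
    by (rule module_hom.span_image[OF module_hom_linearI[OF lin_LA]])
  have siU: "fspan (Uop p ` B) = Uop p ` fspan B"
    by (rule module_hom.span_image[OF module_hom_linearI[OF lin_Uop]])
  have LV: "LA p X \<in> fspan D" if "X \<in> ?V1" for X
  proof -
    have "LA p X \<in> fspan (LA p ` B)" using siL that B(3) by auto
    moreover have "fspan (LA p ` B) \<subseteq> fspan D" by (rule fv.span_mono) (auto simp: D_def)
    ultimately show ?thesis by blast
  qed
  have UV: "Uop p X \<in> fspan D" if "X \<in> ?V1" for X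
  proof -
    have "Uop p X \<in> fspan (Uop p ` B)" using siU that B(3) by auto
    moreover have "fspan (Uop p ` B) \<subseteq> fspan D" by (rule fv.span_mono) (auto simp: D_def)
    ultimately show ?thesis by blast
  qed
  have inV1: "rho1 p (word_of p (length S) n) A \<in> ?V1" if "n < p ^ length S" for S n
  proof -
    have "set (word_of p (length S) n) \<subseteq> {..<p}" using that by (rule set_word_of)
    then have "word_of p (length S) n \<in> words p" by (simp add: words_def)
    then have "rho1 p (word_of p (length S) n) A \<in> {rho1 p S A | S. S \<in> words p}" by blast
    then show ?thesis unfolding rec_closure1_def by (rule subsetD[OF fv.span_superset])
  qed
  have "?G2 \<subseteq> fspan D"
  proof
    fix x assume "x \<in> ?G2"
    then obtain ST where ST0: "ST \<in> Mpq p p" and x0: "x = rho2 p p ST (LA p A)"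
      by blast
    obtain S T where STe: "ST = (S, T)" by (cases ST)
    have ST: "(S, T) \<in> Mpq p p" and x: "x = rho2 p p (S, T) (LA p A)"
      using ST0 x0 STe by simp_all
    have sS: "set S \<subseteq> {..<p}" using ST by (simp add: Mpq_def)
    have "num p S < p ^ length S" by (rule num_less[OF sS])
    then have b1: "num p S - num p T < p ^ length S" and b2: "num p S - num p T - 1 < p ^ length S"
      by linarith+
    have a1: "(if num p T \<le> num p S then LA p (rho1 p (word_of p (length S) (num p S - num p T)) A) else 0) \<in> fspan D"
    proof (cases "num p T \<le> num p S")
      case True show ?thesis unfolding if_P[OF True] by (rule LV[OF inV1[OF b1]])
    next
      case False show ?thesis unfolding if_not_P[OF False] by (rule fv.span_zero)
    qed
    have a2: "(if num p T < num p S then Uop p (rho1 p (word_of p (length S) (num p S - num p T - 1)) A) else 0) \<in> fspan D"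
    proof (cases "num p T < num p S")
      case True show ?thesis unfolding if_P[OF True] by (rule UV[OF inV1[OF b2]])
    next
      case False show ?thesis unfolding if_not_P[OF False] by (rule fv.span_zero)
    qed
    show "x \<in> fspan D" unfolding x rho2_LA[OF ST] by (rule fv.span_add[OF a1 a2])
  qed
  then have V2: "rec_closure2 p p (LA p A) \<subseteq> fspan D"
    unfolding rec_closure2_def by (rule fv.span_minimal[OF _ fv.subspace_span])
  have "fdim (rec_closure2 p p (LA p A)) \<le> card D" by (rule fv.dim_le_card[OF V2 fD])
  also have "\<dots> \<le> card (LA p ` B) + card (Uop p ` B)" unfolding D_def by (rule card_Un_le)
  also have "\<dots> \<le> card B + card B" using card_image_le[OF fB] add_mono by metis
  finally show ?thesis using V2 fD B(4) unfolding fin_dim_def by auto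
qed



lemma LA_Fun2: "LA p A \<in> Fun2 p p"
  by (auto simp: Fun2_def LA_def)

lemma LA_lower: "lower_triangular p (LA p A)"
  by (auto simp: lower_triangular_def LA_def)

lemma LA_toeplitz: "toeplitz_type p (LA p A)"
  unfolding toeplitz_type_def
proof (intro allI impI)
  fix l U W U' W'
  assume H: "U \<in> words_len p l \<and> W \<in> words_len p l \<and> U' \<in> words_len p l \<and> W' \<in> words_len p l \<and>
      int (num p U) - int (num p W) = int (num p U') - int (num p W')"
  then have M: "(U, W) \<in> Mpq p p" "(U', W') \<in> Mpq p p" and L: "length U = l" "length U' = l"
    by (auto simp: words_len_def Mpq_def)
  from H have e: "int (num p U) - int (num p W) = int (num p U') - int (num p W')" by blast
  have c: "(num p W \<le> num p U) = (num p W' \<le> num p U')" using e by linarith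
  have d: "num p U - num p W = num p U' - num p W'" using e by linarith
  show "LA p A (U, W) = LA p A (U', W')"
    unfolding LA_def using M L c d by simp
qed

lemma LA_Qop:
  assumes B: "B \<in> Fun2 p p" "toeplitz_type p B" "lower_triangular p B"
  shows "LA p (Qop p B) = B"
proof (rule ext, clarify)
  fix U W
  show "LA p (Qop p B) (U, W) = B (U, W)"
  proof (cases "(U, W) \<in> Mpq p p")
    case False then show ?thesis using B(1) by (simp add: LA_def Fun2_def)
  next
    case True
    define l where "l = length U"
    have sU: "set U \<subseteq> {..<p}" and sW: "set W \<subseteq> {..<p}" and lW: "length W = l"
      using True by (auto simp: Mpq_def l_def)
    have wlU: "U \<in> words_len p l" and wlW: "W \<in> words_len p l"
      using sU sW lW by (auto simp: words_len_def l_def)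
    have uP: "num p U < p ^ l" using num_less[OF sU] by (simp add: l_def)
    show ?thesis
    proof (cases "num p W \<le> num p U")
      case le: True
      define d where "d = num p U - num p W"
      have dP: "d < p ^ l" using uP by (simp add: d_def)
      have sd: "set (word_of p l d) \<subseteq> {..<p}" by (rule set_word_of[OF dP])
      have wd: "word_of p l d \<in> words p" "word_of p l d \<in> words_len p l"
        using sd by (auto simp: words_def words_len_def)
      have rp: "replicate l 0 \<in> words_len p l"
      proof (cases "l = 0")
        case True then show ?thesis by (simp add: words_len_def)
      next
        case False
        then obtain x xs where "U = x # xs" unfolding l_def by (cases U) auto
        then have "0 < p" using sU by auto
        then show ?thesis using False by (simp add: words_len_def)
      qed
      have nd: "num p (word_of p l d) = d" by (rule num_word_of[OF dP])
      have ieq: "int (num p U) - int (num p W) = int (num p (word_of p l d)) - int (num p (replicate l 0))"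
        using le nd by (simp add: d_def of_nat_diff)
      have "B (U, W) = B (word_of p l d, replicate l 0)"
        using B(2)[unfolded toeplitz_type_def, rule_format, where l=l and U=U and W=W and U'="word_of p l d" and W'="replicate l 0"]
          wlU wlW wd(2) rp ieq by blast
      moreover have "LA p (Qop p B) (U, W) = Qop p B (word_of p l d)"
        using True le by (simp add: LA_def l_def d_def)
      moreover have "Qop p B (word_of p l d) = B (word_of p l d, replicate l 0)"
        using wd(1) by (simp add: Qop_def)
      ultimately show ?thesis by simp
    next
      case False
      then show ?thesis using True B(3) wlU wlW
        unfolding lower_triangular_def by (auto simp: LA_def)
    qed
  qed
qed

theorem mainTheorem10:
  fixes p :: nat
  shows "(\<forall>A :: nat list \<Rightarrow> 'k::field. A \<in> Fun1 p \<longrightarrow>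
            edim (rec_closure1 p A) \<le> edim (rec_closure2 p p (LA p A)) \<and>
            edim (rec_closure2 p p (LA p A)) \<le> 2 * edim (rec_closure1 p A))
       \<and> Vector_Spaces.linear fscale fscale (LA p :: (nat list \<Rightarrow> 'k) \<Rightarrow> _)
       \<and> bij_betw (LA p) (Rec1 p :: (nat list \<Rightarrow> 'k) set) (Trec p)"
proof (intro conjI)
  show "\<forall>A :: nat list \<Rightarrow> 'k::field. A \<in> Fun1 p \<longrightarrow>
            edim (rec_closure1 p A) \<le> edim (rec_closure2 p p (LA p A)) \<and>
            edim (rec_closure2 p p (LA p A)) \<le> 2 * edim (rec_closure1 p A)"
  proof (intro allI impI)
    fix A :: "nat list \<Rightarrow> 'k" assume A: "A \<in> Fun1 p"
    show "edim (rec_closure1 p A) \<le> edim (rec_closure2 p p (LA p A)) \<and>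
            edim (rec_closure2 p p (LA p A)) \<le> 2 * edim (rec_closure1 p A)"
    proof (cases "fin_dim (rec_closure1 p A)")
      case True
      note u = upper[OF True]
      have "fdim (rec_closure1 p A) \<le> fdim (rec_closure2 p p (LA p A))"
        using lin_img[OF lin_Qop[of p] conjunct1[OF u]] Qop_img[OF A] by simp
      then show ?thesis using u True
        by (simp add: edim_def numeral_eq_enat)
    next
      case False
      have "\<not> fin_dim (rec_closure2 p p (LA p A))"
      proof
        assume h: "fin_dim (rec_closure2 p p (LA p A))"
        have "fin_dim (Qop p ` rec_closure2 p p (LA p A))"
          using lin_img[OF lin_Qop[of p] h] by (rule conjunct1)
        then show False using False Qop_img[OF A] by simp
      qed
      then show ?thesis using False by (simp add: edim_def imult_infinity_right)
    qed
  qed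
next
  show "Vector_Spaces.linear fscale fscale (LA p :: (nat list \<Rightarrow> 'k) \<Rightarrow> _)"
    by (rule lin_LA)
next
  show "bij_betw (LA p) (Rec1 p :: (nat list \<Rightarrow> 'k) set) (Trec p)"
    unfolding bij_betw_def
  proof
    show "inj_on (LA p) (Rec1 p :: (nat list \<Rightarrow> 'k) set)"
    proof (rule inj_onI)
      fix x y :: "nat list \<Rightarrow> 'k"
      assume "x \<in> Rec1 p" "y \<in> Rec1 p" "LA p x = LA p y"
      then have "x \<in> Fun1 p" "y \<in> Fun1 p" "LA p x = LA p y" by (simp_all add: Rec1_def)
      then show "x = y" using Qop_LA[of x p] Qop_LA[of y p] by metis
    qed
  next
    show "LA p ` (Rec1 p :: (nat list \<Rightarrow> 'k) set) = Trec p"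
    proof
      show "LA p ` (Rec1 p :: (nat list \<Rightarrow> 'k) set) \<subseteq> Trec p"
      proof
        fix B assume "B \<in> LA p ` (Rec1 p :: (nat list \<Rightarrow> 'k) set)"
        then obtain A :: "nat list \<Rightarrow> 'k" where B: "B = LA p A" and A: "A \<in> Rec1 p" by (rule imageE)
        have "fin_dim (rec_closure1 p A)" using A by (simp add: Rec1_def)
        then have "fin_dim (rec_closure2 p p (LA p A))" by (rule conjunct1[OF upper])
        then show "B \<in> Trec p" unfolding B Trec_def Rec2_def
          by (simp add: LA_Fun2 LA_toeplitz LA_lower)
      qed
    next
      show "Trec p \<subseteq> LA p ` (Rec1 p :: (nat list \<Rightarrow> 'k) set)"
      proof
        fix B :: "nat list \<times> nat list \<Rightarrow> 'k" assume B: "B \<in> Trec p"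
        then have B1: "B \<in> Fun2 p p" "toeplitz_type p B" "lower_triangular p B"
          "fin_dim (rec_closure2 p p B)"
          using B unfolding Trec_def Rec2_def by simp_all
        have e: "LA p (Qop p B) = B" by (rule LA_Qop[OF B1(1-3)])
        have F1: "Qop p B \<in> Fun1 p" by (simp add: Qop_def Fun1_def)
        have "fin_dim (Qop p ` rec_closure2 p p B)"
          using lin_img[OF lin_Qop[of p] B1(4)] by (rule conjunct1)
        moreover have "Qop p ` rec_closure2 p p B = rec_closure1 p (Qop p B)"
          using Qop_img[OF F1] unfolding e .
        ultimately have "fin_dim (rec_closure1 p (Qop p B))" by simp
        then have "Qop p B \<in> Rec1 p" using F1 by (simp add: Rec1_def)
        then show "B \<in> LA p ` Rec1 p" by (rule image_eqI[where f="LA p", OF e[symmetric]])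
      qed
    qed
  qed
qed

end
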